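(* Let $\mathbf{A}\in\mathbb{R}^{M\times N}$ with rows $\mathbf{a}_1^T,\dots,\mathbf{a}_M^T$, let $\sigma_n^2>0$, and let $\bar{\alpha}_t\in(0,1)$. Let $Q:\mathbb{R}\to\mathcal{R}$ be an element-wise scalar quantizer such that each codeword $r\in\mathcal{R}$ corresponds to an interval $Q^{-1}(r)=[r^{\mathrm{low}},r^{\mathrm{up}})$ with $-\infty\le r^{\mathrm{low}}<r^{\mathrm{up}}\le+\infty$, and let the quantized observation be $\bar{\mathbf{y}}=Q(\mathbf{A}\mathbf{h}_0+\mathbf{n})$ with $\mathbf{n}\sim\mathcal{N}(\mathbf{0},\sigma_n^2\mathbf{I})$ independent of $\mathbf{h}_0$. For $\mathbf{h}_t\in\mathbb{R}^N$ define the noise-perturbed likelihood $p_t(\bar{\mathbf{y}}\mid\mathbf{h}_t)=\int p(\bar{\mathbf{y}}\mid\mathbf{h}_0)\,q(\mathbf{h}_0\mid\mathbf{h}_t)\,\mathrm{d}\mathbf{h}_0$, where, under the uninformative-prior assumption, $q(\mathbf{h}_0\mid\mathbf{h}_t)=\mathcal{N}\big(\mathbf{h}_0;\tfrac{1}{\sqrt{\bar{\alpha}_t}}\mathbf{h}_t,\tfrac{1-\bar{\alpha}_t}{\bar{\alpha}_t}\mathbf{I}\big)$. Assume $\mathbf{A}$ is row-orthogonal, i.e. $\mathbf{A}\mathbf{A}^T$ is diagonal. Then $$\nabla_{\mathbf{h}_t}\log p_t(\bar{\mathbf{y}}\mid\mathbf{h}_t)=\frac{1}{\sqrt{\bar{\alpha}_t}}\mathbf{A}^T\mathbf{g},$$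 where $\mathbf{g}=[g_1,\dots,g_M]^T$ with $$g_m=\frac{\exp\big(-\tfrac{(\tilde{y}_m^{\mathrm{low}})^2}{2}\big)-\exp\big(-\tfrac{(\tilde{y}_m^{\mathrm{up}})^2}{2}\big)}{\sqrt{2\pi}\,\tilde{\sigma}_m\big(\Phi(\tilde{y}_m^{\mathrm{up}})-\Phi(\tilde{y}_m^{\mathrm{low}})\big)},\qquad \tilde{y}_m^{\mathrm{up}}=\frac{\bar{y}_m^{\mathrm{up}}-z_m}{\tilde{\sigma}_m},\quad \tilde{y}_m^{\mathrm{low}}=\frac{\bar{y}_m^{\mathrm{low}}-z_m}{\tilde{\sigma}_m},$$ $z_m$ is the $m$-th entry of $\mathbf{z}_t=\frac{1}{\sqrt{\bar{\alpha}_t}}\mathbf{A}\mathbf{h}_t$, $\tilde{\sigma}_m^2=\frac{1-\bar{\alpha}_t}{\bar{\alpha}_t}\|\mathbf{a}_m^T\|_2^2+\sigma_n^2$, $\bar{y}_m^{\mathrm{low}}$ and $\bar{y}_m^{\mathrm{up}}$ are the lower and upper thresholds of the interval associated with the codeword $\bar{y}_m$ (the $m$-th entry of $\bar{\mathbf{y}}$), and $\Phi(u)=\frac{1}{\sqrt{2\pi}}\int_{-\infty}^u e^{-z^2/2}\,\mathrm{d}z$ (with $\exp(-(\pm\infty)^2/2)=0$, $\Phi(-\infty)=0$, $\Phi(+\infty)=1$).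
   Context: Here $\mathbf{h}_t$ is the latent variable of a diffusion model at step $t$ with $\mathbf{h}_t=\sqrt{\bar{\alpha}_t}\mathbf{h}_0+\sqrt{1-\bar{\alpha}_t}\boldsymbol{\epsilon}$, $\boldsymbol{\epsilon}\sim\mathcal{N}(\mathbf{0},\mathbf{I})$; the "uninformative prior" assumption means that the posterior $p(\mathbf{h}_0\mid\mathbf{h}_t)\propto p(\mathbf{h}_t\mid\mathbf{h}_0)p_0(\mathbf{h}_0)$ is replaced by $p(\mathbf{h}_t\mid\mathbf{h}_0)$ viewed as a density in $\mathbf{h}_0$, which is the Gaussian $q$ given in the claim. Equivalently, $\bar{\mathbf{y}}=Q(\frac{1}{\sqrt{\bar{\alpha}_t}}\mathbf{A}\mathbf{h}_t+\tilde{\mathbf{n}})$ with $\tilde{\mathbf{n}}\sim\mathcal{N}(\mathbf{0},\frac{1-\bar{\alpha}_t}{\bar{\alpha}_t}\mathbf{A}\mathbf{A}^T+\sigma_n^2\mathbf{I})$. *)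

theory Defs
  imports "HOL-Probability.Probability"
begin

definition Phi_e :: "ereal \<Rightarrow> real" where
  "Phi_e u = (case u of
      ereal x \<Rightarrow> 1 / sqrt (2 * pi) * set_lebesgue_integral lborel {..x} (\<lambda>z. exp (- z\<^sup>2 / 2))
    | PInfty \<Rightarrow> 1
    | MInfty \<Rightarrow> 0)"

definition gauss_exp_e :: "ereal \<Rightarrow> real" where
  "gauss_exp_e u = (case u of ereal x \<Rightarrow> exp (- x\<^sup>2 / 2) | PInfty \<Rightarrow> 0 | MInfty \<Rightarrow> 0)"

definition norm_thr :: "ereal \<Rightarrow> real \<Rightarrow> real \<Rightarrow> ereal" where
  "norm_thr u z s = (case u of ereal x \<Rightarrow> ereal ((x - z) / s) | PInfty \<Rightarrow> PInfty | MInfty \<Rightarrow> MInfty)"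

definition quant_lik ::
  "real^'n^'m \<Rightarrow> real \<Rightarrow> (real \<Rightarrow> 'c) \<Rightarrow> 'c^'m \<Rightarrow> real^'n \<Rightarrow> real" where
  "quant_lik A sigma_n Q ybar h0 =
     (\<integral>n. indicator {n::real^'m. \<forall>m. Q ((A *v h0) $ m + n $ m) = ybar $ m} n
            * (\<Prod>m\<in>UNIV. normal_density 0 sigma_n (n $ m)) \<partial>lborel)"

definition pert_lik ::
  "real^'n^'m \<Rightarrow> real \<Rightarrow> real \<Rightarrow> (real \<Rightarrow> 'c) \<Rightarrow> 'c^'m \<Rightarrow> real^'n \<Rightarrow> real" where
  "pert_lik A sigma_n abar Q ybar ht =
     (\<integral>h0. quant_lik A sigma_n Q ybar h0
            * (\<Prod>i\<in>UNIV. normal_density (ht $ i / sqrt abar) (sqrt ((1 - abar) / abar)) (h0 $ i))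
       \<partial>lborel)"

end

theory Submission
  imports Defs "HOL-Library.Numeral_Type"
begin

lemma Basis_vec_image: "(Basis :: (real^'a) set) = (\<lambda>a. axis a 1) ` UNIV"
  by (auto simp: Basis_vec_def)

lemma inj_axis1: "inj (\<lambda>a::'a::finite. axis a (1::real))"
  by (auto intro!: injI simp: axis_eq_axis)

lemma nn_integral_vec_prod:
  fixes f :: "'a::finite \<Rightarrow> real \<Rightarrow> ennreal"
  assumes [measurable]: "\<And>a. f a \<in> borel_measurable borel"
  shows "(\<integral>\<^sup>+x. (\<Prod>a\<in>UNIV. f a (x $ a)) \<partial>(lborel :: (real^'a) measure)) = (\<Prod>a\<in>UNIV. (\<integral>\<^sup>+t. f a t \<partial>lborel))"
proof -
  define g where "g b = f (SOME a. b = axis a 1)" for b :: "real^'a"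
  have g: "g (axis a 1) = f a" for a
    unfolding g_def by (rule arg_cong[where f=f], rule some_equality) (auto simp: axis_eq_axis)
  have "(\<integral>\<^sup>+x. (\<Prod>b\<in>Basis. g b (x \<bullet> b)) \<partial>(lborel :: (real^'a) measure)) = (\<Prod>b\<in>Basis. (\<integral>\<^sup>+t. g b t \<partial>lborel))"
    by (rule nn_integral_lborel_prod) (auto simp: Basis_vec_image g)
  moreover have "(\<Prod>b\<in>Basis. g b (x \<bullet> b)) = (\<Prod>a\<in>UNIV. f a (x $ a))" for x :: "real^'a"
    unfolding Basis_vec_image by (subst prod.reindex[OF inj_axis1]) (simp add: g inner_axis)
  moreover have "(\<Prod>b\<in>Basis. (\<integral>\<^sup>+t. g b t \<partial>lborel)) = (\<Prod>a\<in>UNIV. (\<integral>\<^sup>+t. f a t \<partial>lborel))"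
    unfolding Basis_vec_image by (subst prod.reindex[OF inj_axis1]) (simp add: g)
  ultimately show ?thesis by simp
qed

lemma measure_eq_boxes:
  fixes M N :: "'a::euclidean_space measure"
  assumes sM: "sets M = sets borel" and sN: "sets N = sets borel"
    and fin: "emeasure M UNIV \<noteq> \<infinity>"
    and eq: "\<And>l u. emeasure M (box l u) = emeasure N (box l u)"
  shows "M = N"
proof (rule measure_eqI_generator_eq[where E="range (\<lambda>(a, b). box a b)" and \<Omega>=UNIV
      and A="\<lambda>n::nat. box (- (real n *\<^sub>R One)) (real n *\<^sub>R One)"])
  show "Int_stable (range (\<lambda>(a, b). box a b::'a set))"
    by (auto simp: Int_stable_def box_Int_box)
  show "range (\<lambda>(a, b). box a b) \<subseteq> Pow UNIV" by auto
  show "sets M = sigma_sets UNIV (range (\<lambda>(a, b). box a b))" "sets N = sigma_sets UNIV (range (\<lambda>(a, b). box a b))"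
    by (simp_all add: borel_eq_box sM sN)
  show "range (\<lambda>n::nat. box (- (real n *\<^sub>R One)) (real n *\<^sub>R One)) \<subseteq> range (\<lambda>(a, b). box a b::'a set)"
    by auto
  show "(\<Union>i. box (- (real i *\<^sub>R One)) (real i *\<^sub>R One)) = (UNIV::'a set)"
    unfolding UN_box_eq_UNIV by auto
  show "emeasure M (box (- (real i *\<^sub>R One)) (real i *\<^sub>R One)) \<noteq> \<infinity>" for i
  proof -
    have "emeasure M (box (- (real i *\<^sub>R One)) (real i *\<^sub>R One)) \<le> emeasure M (space M)"
      by (rule emeasure_space)
    also have "space M = UNIV" using sM by (metis sets_eq_imp_space_eq space_borel)
    finally show ?thesis using fin by (auto simp: top_unique)
  qed
  show "emeasure M X = emeasure N X" if "X \<in> range (\<lambda>(a, b). box a b)" for X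
    using that eq by auto
qed

definition gdens :: "(real^'a) \<Rightarrow> real" where
  "gdens x = (\<Prod>a\<in>UNIV. std_normal_density (x $ a))"

lemma gdens_nonneg[simp]: "0 \<le> gdens x"
  by (simp add: gdens_def prod_nonneg)

lemma borel_measurable_gdens[measurable]: "gdens \<in> borel_measurable borel"
  unfolding gdens_def[abs_def] by measurable

lemma indicator_box_cart:
  "(indicator (box l u) (x::real^'a) :: ennreal) = (\<Prod>a\<in>UNIV. indicator {l$a<..<u$a} (x$a))"
proof (cases "x \<in> box l u")
  case True then show ?thesis by (simp add: mem_box_cart)
next
  case False
  then obtain a where "\<not> (l$a < x$a \<and> x$a < u$a)" by (auto simp: mem_box_cart)
  then have "(\<Prod>a\<in>UNIV. indicator {l$a<..<u$a} (x$a) :: ennreal) = 0"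
    by (intro prod_zero bexI[of _ a]) auto
  with False show ?thesis by simp
qed

lemma nn_integral_std_normal: "(\<integral>\<^sup>+t. ennreal (std_normal_density t) \<partial>lborel) = 1"
  by (subst nn_integral_eq_integral) auto

lemma gdens_box:
  "(\<integral>\<^sup>+x. ennreal (gdens (x::real^'a)) * indicator (box l u) x \<partial>lborel)
    = (\<Prod>a\<in>UNIV. (\<integral>\<^sup>+t. ennreal (std_normal_density t) * indicator {l$a<..<u$a} t \<partial>lborel))"
proof -
  have "(\<integral>\<^sup>+x. ennreal (gdens (x::real^'a)) * indicator (box l u) x \<partial>lborel)
     = (\<integral>\<^sup>+x. (\<Prod>a\<in>UNIV. ennreal (std_normal_density (x$a)) * indicator {l$a<..<u$a} (x$a)) \<partial>lborel)"
    by (intro nn_integral_cong) (simp add: indicator_box_cart gdens_def prod_ennreal[symmetric] prod.distrib)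
  also have "\<dots> = (\<Prod>a\<in>UNIV. (\<integral>\<^sup>+t. ennreal (std_normal_density t) * indicator {l$a<..<u$a} t \<partial>lborel))"
    by (rule nn_integral_vec_prod) measurable
  finally show ?thesis .
qed

lemma gdens_total: "(\<integral>\<^sup>+x. ennreal (gdens (x::real^'a)) \<partial>lborel) = 1"
proof -
  have "(\<integral>\<^sup>+x. ennreal (gdens (x::real^'a)) \<partial>lborel)
     = (\<integral>\<^sup>+x. (\<Prod>a\<in>UNIV. ennreal (std_normal_density ((x::real^'a)$a))) \<partial>lborel)"
    unfolding gdens_def by (simp add: prod_ennreal)
  also have "\<dots> = (\<Prod>a\<in>(UNIV::'a set). (\<integral>\<^sup>+t. ennreal (std_normal_density t) \<partial>lborel))"
    by (rule nn_integral_vec_prod) measurable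
  finally show ?thesis by (simp add: nn_integral_std_normal)
qed

lemma marginal_gdens:
  fixes \<iota> :: "'a::finite \<Rightarrow> 'k::finite"
  assumes inj: "inj \<iota>" and g[measurable]: "g \<in> borel_measurable borel"
  shows "(\<integral>\<^sup>+w. g (\<chi> a. w $ \<iota> a) * ennreal (gdens (w::real^'k)) \<partial>lborel)
       = (\<integral>\<^sup>+x. g x * ennreal (gdens (x::real^'a)) \<partial>lborel)"
proof -
  define pr :: "real^'k \<Rightarrow> real^'a" where "pr w = (\<chi> a. w $ \<iota> a)" for w
  have pr_meas[measurable]: "pr \<in> borel_measurable borel"
    unfolding pr_def by (rule borel_measurable_continuous_onI) (intro continuous_intros)
  define M where "M = distr (density lborel (\<lambda>w::real^'k. ennreal (gdens w))) borel pr"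
  define N where "N = density lborel (\<lambda>x::real^'a. ennreal (gdens x))"
  have "M = N"
  proof (rule measure_eq_boxes)
    show "sets M = sets borel" "sets N = sets borel" by (simp_all add: M_def N_def)
    have "emeasure M UNIV = (\<integral>\<^sup>+w. ennreal (gdens (w::real^'k)) \<partial>lborel)"
      by (simp add: M_def emeasure_distr emeasure_density)
    then show "emeasure M UNIV \<noteq> \<infinity>" by (simp add: gdens_total)
    fix l u :: "real^'a"
    define p where "p a = (\<integral>\<^sup>+t. ennreal (std_normal_density t) * indicator {l$a<..<u$a} t \<partial>lborel)" for a
    define f where "f j t = ennreal (std_normal_density t) * (if j \<in> range \<iota> then indicator {l $ inv \<iota> j<..<u $ inv \<iota> j} t else 1)" for j t
    have "emeasure N (box l u) = (\<Prod>a\<in>UNIV. p a)"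
      unfolding N_def by (subst emeasure_density) (auto simp: gdens_box p_def)
    moreover have "emeasure M (box l u) = (\<Prod>a\<in>UNIV. p a)"
    proof -
      have "emeasure M (box l u) = (\<integral>\<^sup>+x. indicator (box l u) x \<partial>M)"
        by (subst nn_integral_indicator) (auto simp: M_def)
      also have "\<dots> = (\<integral>\<^sup>+w. ennreal (gdens (w::real^'k)) * indicator (box l u) (pr w) \<partial>lborel)"
        unfolding M_def by (subst nn_integral_distr) (auto intro!: nn_integral_density)
      also have "\<dots> = (\<integral>\<^sup>+w. (\<Prod>j\<in>UNIV. f j (w $ j)) \<partial>lborel)"
      proof (intro nn_integral_cong)
        fix w :: "real^'k"
        have "indicator (box l u) (pr w) = (\<Prod>a\<in>UNIV. indicator {l$a<..<u$a} (w $ \<iota> a) :: ennreal)"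
          by (simp add: indicator_box_cart pr_def)
        also have "\<dots> = (\<Prod>j\<in>range \<iota>. indicator {l $ inv \<iota> j<..<u $ inv \<iota> j} (w $ j))"
          by (subst prod.reindex[OF inj]) (simp add: inv_f_f[OF inj])
        also have "\<dots> = (\<Prod>j\<in>UNIV. (if j \<in> range \<iota> then indicator {l $ inv \<iota> j<..<u $ inv \<iota> j} (w $ j) else 1))"
          by (rule prod.mono_neutral_cong_left) auto
        finally show "ennreal (gdens w) * indicator (box l u) (pr w) = (\<Prod>j\<in>UNIV. f j (w $ j))"
          by (simp add: f_def prod.distrib gdens_def prod_ennreal[symmetric])
      qed
      also have "\<dots> = (\<Prod>j\<in>UNIV. (\<integral>\<^sup>+t. f j t \<partial>lborel))"
        by (rule nn_integral_vec_prod) (simp add: f_def)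
      also have "\<dots> = (\<Prod>j\<in>range \<iota>. (\<integral>\<^sup>+t. f j t \<partial>lborel))"
        by (rule prod.mono_neutral_cong_right) (auto simp: f_def nn_integral_std_normal)
      also have "\<dots> = (\<Prod>a\<in>UNIV. p a)"
        by (subst prod.reindex[OF inj]) (auto simp: f_def p_def inv_f_f[OF inj] intro!: prod.cong nn_integral_cong)
      finally show ?thesis .
    qed
    ultimately show "emeasure M (box l u) = emeasure N (box l u)" by simp
  qed
  have "(\<integral>\<^sup>+w. g (pr w) * ennreal (gdens (w::real^'k)) \<partial>lborel) = (\<integral>\<^sup>+x. g x \<partial>M)"
    by (simp add: M_def nn_integral_distr nn_integral_density mult.commute)
  also have "\<dots> = (\<integral>\<^sup>+x. g x \<partial>N)" using \<open>M = N\<close> by simp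
  also have "\<dots> = (\<integral>\<^sup>+x. g x * ennreal (gdens (x::real^'a)) \<partial>lborel)"
    by (simp add: N_def nn_integral_density mult.commute)
  finally show ?thesis by (simp add: pr_def)
qed

lemma borel_measurable_linear_vec:
  fixes T :: "'a::euclidean_space \<Rightarrow> 'b::euclidean_space"
  assumes "linear T" shows "T \<in> borel_measurable borel"
  using assms by (intro borel_measurable_continuous_onI linear_continuous_on linear_conv_bounded_linear[THEN iffD1])

lemma lborel_orth:
  fixes T :: "real^'k::{finite,wellorder} \<Rightarrow> real^'k::_"
  assumes T: "orthogonal_transformation T"
  shows "distr lborel borel T = lborel"
proof (rule lborel_eqI[symmetric])
  have lin: "linear T" using T by (rule orthogonal_transformation_linear)
  have Tm[measurable]: "T \<in> borel_measurable borel" using lin by (rule borel_measurable_linear_vec)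
  have bij: "bij T" using T by (rule orthogonal_transformation_bij)
  have Ti: "orthogonal_transformation (inv T)" using T by (rule orthogonal_transformation_inv)
  fix l u :: "(real, 'k::{finite,wellorder}) vec"
  assume le: "\<And>b. b \<in> Basis \<Longrightarrow> l \<bullet> b \<le> u \<bullet> b"
  have pre: "T -` box l u = inv T ` box l u"
    using bij by (simp add: bij_vimage_eq_inv_image)
  have bs: "T -` box l u \<in> sets lborel" using measurable_sets[OF Tm, of "box l u"] by simp
  have "emeasure (distr lborel borel T) (box l u) = emeasure lborel (T -` box l u)"
    by (subst emeasure_distr) auto
  also have "\<dots> = emeasure lebesgue (T -` box l u)"
    using bs by (simp add: main_part_sets)
  also have "\<dots> = ennreal (measure lebesgue (T -` box l u))"
    unfolding pre using measurable_orthogonal_image[OF Ti, of "box l u"]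
    by (simp add: emeasure_eq_measure2)
  also have "measure lebesgue (T -` box l u) = measure lebesgue (box l u)"
    unfolding pre by (rule measure_orthogonal_image[OF Ti]) simp
  also have "ennreal (measure lebesgue (box l u)) = emeasure lebesgue (box l u)"
    by (simp add: emeasure_eq_measure2)
  also have "\<dots> = emeasure lborel (box l u)"
    by (simp add: main_part_sets)
  finally show "emeasure (distr lborel borel T) (box l u) = (\<Prod>b\<in>Basis. (u - l) \<bullet> b)"
    using le by (simp add: emeasure_lborel_box_eq)
qed simp

lemma gdens_norm: "gdens (w::real^'a) = (1 / sqrt (2 * pi)) ^ CARD('a) * exp (- (norm w)\<^sup>2 / 2)"
proof -
  have "(norm w)\<^sup>2 = (\<Sum>a\<in>UNIV. (w $ a)\<^sup>2)"
    by (simp only: power2_norm_eq_inner) (simp add: inner_vec_def power2_eq_square)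
  then have "exp (- (norm w)\<^sup>2 / 2) = (\<Prod>a\<in>UNIV. exp (- (w $ a)\<^sup>2 / 2))"
    by (simp add: exp_sum[symmetric] sum_negf sum_divide_distrib)
  then show ?thesis
    by (simp add: gdens_def std_normal_density_def prod_dividef power_one_over)
qed

lemma gdens_orth:
  fixes T :: "real^'a \<Rightarrow> real^'a"
  assumes "orthogonal_transformation T" shows "gdens (T w) = gdens w"
  using assms by (simp add: gdens_norm orthogonal_transformation_norm)

lemma nn_integral_gdens_orth:
  fixes T :: "real^'k::{finite,wellorder} \<Rightarrow> real^'k::_"
  assumes T: "orthogonal_transformation T" and g[measurable]: "g \<in> borel_measurable borel"
  shows "(\<integral>\<^sup>+w. g (T w) * ennreal (gdens w) \<partial>lborel) = (\<integral>\<^sup>+w. g w * ennreal (gdens w) \<partial>lborel)"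
proof -
  have Tm[measurable]: "T \<in> borel_measurable borel"
    using T by (intro borel_measurable_linear_vec orthogonal_transformation_linear)
  have "(\<integral>\<^sup>+w. g w * ennreal (gdens w) \<partial>lborel) = (\<integral>\<^sup>+w. g w * ennreal (gdens w) \<partial>distr lborel borel T)"
    by (simp add: lborel_orth[OF T])
  also have "\<dots> = (\<integral>\<^sup>+w. g (T w) * ennreal (gdens (T w)) \<partial>lborel)"
    by (subst nn_integral_distr) auto
  finally show ?thesis by (simp add: gdens_orth[OF T])
qed

lemma orthonormal_extend:
  fixes S :: "'a::euclidean_space set"
  assumes S: "pairwise orthogonal S" and n1: "\<And>x. x \<in> S \<Longrightarrow> norm x = 1"
  obtains B where "S \<subseteq> B" "pairwise orthogonal B" "\<And>x. x \<in> B \<Longrightarrow> norm x = 1"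
    "finite B" "card B = DIM('a)"
proof -
  obtain U where U: "U \<inter> (insert 0 S) = {}" "pairwise orthogonal (S \<union> U)"
                  "span (S \<union> U) = span (S \<union> UNIV)"
    using orthogonal_extension_strong[OF S] by blast
  define C where "C = S \<union> U"
  have C0: "0 \<notin> C" using U(1) n1 by (force simp: C_def)
  have Cind: "independent C" using U(2) C0 by (simp add: C_def pairwise_orthogonal_independent)
  have Cfin: "finite C" using independent_bound[OF Cind] by simp
  have Cspan: "span C = UNIV" using U(3) by (simp add: C_def span_UNIV)
  have Ccard: "card C = DIM('a)"
    using dim_eq_card_independent[OF Cind] Cspan by (metis dim_UNIV dim_span)
  let ?B = "(\<lambda>x. x /\<^sub>R norm x) ` C"
  show thesis
  proof
    show "S \<subseteq> ?B"
    proof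
      fix x assume "x \<in> S"
      then have "x = x /\<^sub>R norm x" "x \<in> C" using n1 by (auto simp: C_def)
      then show "x \<in> ?B" by blast
    qed
    show po: "pairwise orthogonal ?B"
    proof (rule pairwiseI)
      fix a c assume "a \<in> ?B" "c \<in> ?B" "a \<noteq> c"
      then obtain x y where xy: "x \<in> C" "y \<in> C" "a = x /\<^sub>R norm x" "c = y /\<^sub>R norm y" "x \<noteq> y"
        by blast
      then have "orthogonal x y" using U(2) by (auto simp: C_def pairwise_def)
      then show "orthogonal a c" using xy by (simp add: orthogonal_scaleR orthogonal_def)
    qed
    show "\<And>x. x \<in> ?B \<Longrightarrow> norm x = 1"
      using C0 by (auto simp: field_split_simps)
    show "finite ?B" using Cfin by simp
    have "inj_on (\<lambda>x. x /\<^sub>R norm x) C"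
      unfolding inj_on_def
      by (metis (full_types) U(2) C_def C0 inverse_nonzero_iff_nonzero norm_eq_zero orthogonal_scaleR orthogonal_self pairwise_def)
    then show "card ?B = DIM('a)"
      by (simp add: card_image Ccard)
  qed
qed

lemma gauss_orth_wo:
  fixes b :: "'m::finite \<Rightarrow> (real, 'k::{finite,wellorder}) vec" and F :: "'m \<Rightarrow> real \<Rightarrow> ennreal"
  assumes orth: "\<And>i j. i \<noteq> j \<Longrightarrow> b i \<bullet> b j = 0"
    and F[measurable]: "\<And>m. F m \<in> borel_measurable borel"
  shows "(\<integral>\<^sup>+w. (\<Prod>m\<in>UNIV. F m (b m \<bullet> w)) * ennreal (gdens w) \<partial>lborel)
       = (\<Prod>m\<in>UNIV. \<integral>\<^sup>+t. F m (norm (b m) * t) * ennreal (std_normal_density t) \<partial>lborel)"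
proof -
  define R where "R = {m. b m \<noteq> 0}"
  define u where "u m = b m /\<^sub>R norm (b m)" for m
  have u_norm: "norm (u m) = 1" if "m \<in> R" for m
    using that by (simp add: u_def R_def)
  have u_orth: "u m \<bullet> u m' = 0" if "m \<noteq> m'" for m m'
    using orth[OF that] by (simp add: u_def)
  have u_inj: "inj_on u R"
  proof (rule inj_onI)
    fix m m' assume "m \<in> R" "m' \<in> R" "u m = u m'"
    then have "u m \<bullet> u m' = 1" using u_norm by (simp add: norm_eq_1)
    then show "m = m'" using u_orth by fastforce
  qed
  have po: "pairwise orthogonal (u ` R)"
    by (auto simp: pairwise_def orthogonal_def) (metis u_orth)
  obtain B where B: "u ` R \<subseteq> B" "pairwise orthogonal B" "\<And>x. x \<in> B \<Longrightarrow> norm x = 1"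
    "finite B" "card B = DIM((real, 'k) vec)"
    using orthonormal_extend[OF po] u_norm by blast
  have "card (UNIV :: 'k set) = card B" using B(5) by simp
  then obtain \<beta> where \<beta>: "bij_betw \<beta> (UNIV :: 'k set) B"
    using B(4) by (metis bij_betw_iff_card finite)
  have \<beta>B: "\<beta> j \<in> B" for j using \<beta> by (auto simp: bij_betw_def)
  have \<beta>inj: "inj \<beta>" using \<beta> by (simp add: bij_betw_def)
  have \<beta>inner: "\<beta> i \<bullet> \<beta> j = (if i = j then 1 else 0)" for i j
  proof (cases "i = j")
    case True then show ?thesis using B(3)[OF \<beta>B] by (simp add: norm_eq_1)
  next
    case False then have "\<beta> i \<noteq> \<beta> j" using \<beta>inj by (auto dest: injD)
    then show ?thesis using B(2) \<beta>B False by (auto simp: pairwise_def orthogonal_def)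
  qed
  define T where "T w = (\<Sum>j\<in>UNIV. (w $ j) *\<^sub>R \<beta> j)" for w :: "(real, 'k) vec"
  have T_lin: "linear T"
    unfolding T_def by (intro linear_compose_sum) (auto intro!: linear_scaleR_left linear_compose[of "\<lambda>w. w$_" "\<lambda>x. x *\<^sub>R _", unfolded o_def] bounded_linear.linear[OF bounded_linear_vec_nth])
  have T_inner: "T v \<bullet> T w = v \<bullet> w" for v w
  proof -
    have "T v \<bullet> T w = (\<Sum>i\<in>UNIV. \<Sum>j\<in>UNIV. (v $ i) * (w $ j) * (\<beta> i \<bullet> \<beta> j))"
      apply (simp add: T_def inner_sum_left inner_sum_right sum_distrib_left)
      apply (subst sum.swap)
      apply (simp add: ac_simps)
      done
    also have "\<dots> = (\<Sum>i\<in>UNIV. (v $ i) * (w $ i))"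
      by (simp add: \<beta>inner if_distrib[of "\<lambda>x. _ * x"] cong: if_cong)
    also have "\<dots> = v \<bullet> w" by (simp add: inner_vec_def)
    finally show ?thesis .
  qed
  have T_orth: "orthogonal_transformation T"
    using T_lin T_inner by (simp add: orthogonal_transformation norm_eq_sqrt_inner)
  define \<pi> where "\<pi> m = inv_into UNIV \<beta> (u m)" for m
  have \<beta>\<pi>: "\<beta> (\<pi> m) = u m" if "m \<in> R" for m
    using that B(1) \<beta> unfolding \<pi>_def by (metis bij_betw_inv_into_right image_subset_iff)
  have key: "b m \<bullet> T w = norm (b m) * w $ \<pi> m" for m w
  proof (cases "m \<in> R")
    case False then show ?thesis by (simp add: R_def)
  next
    case True
    have bm: "b m = norm (b m) *\<^sub>R u m" using True by (simp add: u_def R_def)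
    have "b m \<bullet> T w = norm (b m) * (\<Sum>j\<in>UNIV. w $ j * (\<beta> (\<pi> m) \<bullet> \<beta> j))"
      by (subst bm) (simp add: T_def inner_sum_right sum_distrib_left \<beta>\<pi>[OF True] ac_simps)
    also have "\<dots> = norm (b m) * w $ \<pi> m"
      by (simp add: \<beta>inner if_distrib[of "\<lambda>x. _ * x"] cong: if_cong)
    finally show ?thesis .
  qed
  have LHS: "(\<integral>\<^sup>+w. (\<Prod>m\<in>UNIV. F m (b m \<bullet> w)) * ennreal (gdens w) \<partial>lborel)
     = (\<integral>\<^sup>+w. (\<Prod>m\<in>UNIV. F m (norm (b m) * w $ \<pi> m)) * ennreal (gdens w) \<partial>lborel)"
    using nn_integral_gdens_orth[OF T_orth, of "\<lambda>w. \<Prod>m\<in>UNIV. F m (b m \<bullet> w)"]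
    by (simp add: key)
  define c where "c m = norm (b m)" for m
  have c0: "m \<notin> R \<Longrightarrow> c m = 0" for m by (simp add: c_def R_def)
  have \<pi>inj: "inj_on \<pi> R"
    by (rule inj_onI) (metis \<beta>\<pi> u_inj inj_onD)
  define pinv where "pinv j = the_inv_into R \<pi> j" for j
  have pinv: "pinv (\<pi> m) = m" if "m \<in> R" for m
    unfolding pinv_def using \<pi>inj that by (rule the_inv_into_f_f)
  define g where "g j t = ennreal (std_normal_density t) * (if j \<in> \<pi> ` R then F (pinv j) (c (pinv j) * t) else 1)" for j t
  define C where "C = (\<Prod>m\<in>UNIV - R. F m 0)"
  have fin: "finite R" by simp
  have pw: "(\<Prod>m\<in>UNIV. F m (c m * w $ \<pi> m)) * ennreal (gdens w) = C * (\<Prod>j\<in>UNIV. g j (w $ j))" for w :: "(real, 'k) vec"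
  proof -
    have "(\<Prod>m\<in>UNIV. F m (c m * w $ \<pi> m)) = (\<Prod>m\<in>R. F m (c m * w $ \<pi> m)) * C"
      unfolding C_def
      by (subst prod.subset_diff[of R UNIV]) (auto simp: c0 mult.commute intro!: prod.cong)
    moreover have "(\<Prod>m\<in>R. F m (c m * w $ \<pi> m)) = (\<Prod>j\<in>\<pi> ` R. F (pinv j) (c (pinv j) * w $ j))"
      by (subst prod.reindex[OF \<pi>inj]) (simp add: pinv)
    moreover have "\<dots> = (\<Prod>j\<in>UNIV. (if j \<in> \<pi> ` R then F (pinv j) (c (pinv j) * w $ j) else 1))"
      by (rule prod.mono_neutral_cong_left) auto
    moreover have "ennreal (gdens w) = (\<Prod>j\<in>UNIV. ennreal (std_normal_density (w $ j)))"
      by (simp add: gdens_def prod_ennreal)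
    ultimately show ?thesis
      by (simp add: g_def prod.distrib ac_simps)
  qed
  have "(\<integral>\<^sup>+w. (\<Prod>m\<in>UNIV. F m (c m * w $ \<pi> m)) * ennreal (gdens w) \<partial>lborel)
      = (\<integral>\<^sup>+w. C * (\<Prod>j\<in>UNIV. g j (w $ j)) \<partial>lborel)"
    by (simp add: pw)
  also have "\<dots> = C * (\<integral>\<^sup>+w. (\<Prod>j\<in>UNIV. g j ((w :: (real, 'k) vec) $ j)) \<partial>lborel)"
    by (rule nn_integral_cmult) (simp add: g_def)
  also have "(\<integral>\<^sup>+w. (\<Prod>j\<in>UNIV. g j ((w :: (real, 'k) vec) $ j)) \<partial>lborel) = (\<Prod>j\<in>UNIV. \<integral>\<^sup>+t. g j t \<partial>lborel)"
    by (rule nn_integral_vec_prod) (simp add: g_def)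
  also have "\<dots> = (\<Prod>j\<in>\<pi> ` R. \<integral>\<^sup>+t. g j t \<partial>lborel)"
    by (rule prod.mono_neutral_cong_right) (auto simp: g_def nn_integral_std_normal)
  also have "\<dots> = (\<Prod>m\<in>R. \<integral>\<^sup>+t. F m (c m * t) * ennreal (std_normal_density t) \<partial>lborel)"
    by (subst prod.reindex[OF \<pi>inj]) (auto simp: g_def pinv mult.commute intro!: prod.cong nn_integral_cong)
  also have "C = (\<Prod>m\<in>UNIV - R. \<integral>\<^sup>+t. F m (c m * t) * ennreal (std_normal_density t) \<partial>lborel)"
    unfolding C_def
    by (intro prod.cong refl) (simp add: c0 nn_integral_cmult nn_integral_std_normal)
  finally have "(\<integral>\<^sup>+w. (\<Prod>m\<in>UNIV. F m (c m * w $ \<pi> m)) * ennreal (gdens w) \<partial>lborel)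
     = (\<Prod>m\<in>UNIV. \<integral>\<^sup>+t. F m (c m * t) * ennreal (std_normal_density t) \<partial>lborel)"
    by (subst prod.subset_diff[of R UNIV]) (auto simp: mult.commute)
  then show ?thesis using LHS by (simp add: c_def)
qed

lemma sum_range_inj:
  fixes \<iota> :: "'a::finite \<Rightarrow> 'k::finite"
  assumes inj: "inj \<iota>"
  shows "(\<Sum>j\<in>UNIV. (if j \<in> range \<iota> then h (inv \<iota> j) j else 0)) = (\<Sum>a\<in>UNIV. h a (\<iota> a))"
proof -
  have "(\<Sum>j\<in>UNIV. (if j \<in> range \<iota> then h (inv \<iota> j) j else 0)) = (\<Sum>j\<in>range \<iota>. h (inv \<iota> j) j)"
    by (rule sum.mono_neutral_cong_left[symmetric]) auto
  also have "\<dots> = (\<Sum>a\<in>UNIV. h a (\<iota> a))"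
    by (subst sum.reindex[OF inj]) (simp add: inv_f_f[OF inj])
  finally show ?thesis .
qed

lemma gauss_orth:
  fixes b :: "'m::finite \<Rightarrow> real^'n" and F :: "'m \<Rightarrow> real \<Rightarrow> ennreal"
  assumes orth: "\<And>i j. i \<noteq> j \<Longrightarrow> b i \<bullet> b j = 0"
    and F[measurable]: "\<And>m. F m \<in> borel_measurable borel"
  shows "(\<integral>\<^sup>+w. (\<Prod>m\<in>UNIV. F m (b m \<bullet> w)) * ennreal (gdens w) \<partial>lborel)
       = (\<Prod>m\<in>UNIV. \<integral>\<^sup>+t. F m (norm (b m) * t) * ennreal (std_normal_density t) \<partial>lborel)"
proof -
  have "card (UNIV :: 'n set) \<le> card (UNIV :: 'n bit0 set)" by simp
  then obtain \<iota> :: "'n \<Rightarrow> 'n bit0" where inj: "inj \<iota>"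
    by (metis card_le_inj finite subset_UNIV)
  define b' :: "'m \<Rightarrow> (real, 'n bit0) vec" where "b' m = (\<chi> j. if j \<in> range \<iota> then b m $ (inv \<iota> j) else 0)" for m
  have b'w: "b' m \<bullet> w = b m \<bullet> (\<chi> a. w $ \<iota> a)" for m w
  proof -
    have "b' m \<bullet> w = (\<Sum>j\<in>UNIV. (if j \<in> range \<iota> then b m $ (inv \<iota> j) * w $ j else 0))"
      by (simp add: b'_def inner_vec_def if_distrib[of "\<lambda>x. x * _"] cong: if_cong)
    also have "\<dots> = (\<Sum>a\<in>UNIV. b m $ a * w $ \<iota> a)"
      using sum_range_inj[OF inj, of "\<lambda>a j. b m $ a * w $ j"] by simp
    finally show ?thesis by (simp add: inner_vec_def)
  qed
  have b'b: "b' i \<bullet> b' j = b i \<bullet> b j" for i j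
  proof -
    have "b' i \<bullet> b' j = b i \<bullet> (\<chi> a. b' j $ \<iota> a)" by (rule b'w)
    also have "(\<chi> a. b' j $ \<iota> a) = b j" by (simp add: b'_def vec_eq_iff inv_f_f[OF inj])
    finally show ?thesis .
  qed
  have nb: "norm (b' m) = norm (b m)" for m
    by (simp add: norm_eq_sqrt_inner b'b)
  have g[measurable]: "(\<lambda>x::real^'n. \<Prod>m\<in>UNIV. F m (b m \<bullet> x)) \<in> borel_measurable borel"
    by measurable
  have "(\<integral>\<^sup>+w. (\<Prod>m\<in>UNIV. F m (b m \<bullet> w)) * ennreal (gdens w) \<partial>lborel)
     = (\<integral>\<^sup>+w. (\<Prod>m\<in>UNIV. F m (b m \<bullet> (\<chi> a. w $ \<iota> a))) * ennreal (gdens (w :: (real, 'n bit0) vec)) \<partial>lborel)"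
    by (rule marginal_gdens[OF inj g, symmetric])
  also have "\<dots> = (\<integral>\<^sup>+w. (\<Prod>m\<in>UNIV. F m (b' m \<bullet> w)) * ennreal (gdens (w :: (real, 'n bit0) vec)) \<partial>lborel)"
    by (simp add: b'w)
  also have "\<dots> = (\<Prod>m\<in>UNIV. \<integral>\<^sup>+t. F m (norm (b' m) * t) * ennreal (std_normal_density t) \<partial>lborel)"
    by (rule gauss_orth_wo) (simp_all add: b'b orth)
  finally show ?thesis by (simp add: nb)
qed

lemma Phi_e_real: "Phi_e (ereal x) = (\<integral>t. std_normal_density t * indicator {..x} t \<partial>lborel)"
proof -
  have "Phi_e (ereal x) = 1 / sqrt (2 * pi) * (\<integral>t. indicator {..x} t * exp (- t\<^sup>2 / 2) \<partial>lborel)"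
    by (simp add: Phi_e_def set_lebesgue_integral_def)
  also have "\<dots> = (\<integral>t. std_normal_density t * indicator {..x} t \<partial>lborel)"
    by (subst integral_mult_right_zero[symmetric]) (auto intro!: Bochner_Integration.integral_cong simp: std_normal_density_def)
  finally show ?thesis .
qed

lemma Psi_eq: "(\<integral>\<^sup>+t. ennreal (std_normal_density t) * indicator {t. ereal t < E} t \<partial>lborel) = ennreal (Phi_e E)"
proof (cases E)
  case (real x)
  have "(\<integral>\<^sup>+t. ennreal (std_normal_density t) * indicator {t. ereal t < E} t \<partial>lborel)
      = (\<integral>\<^sup>+t. ennreal (std_normal_density t * indicator {..x} t) \<partial>lborel)"
  proof (rule nn_integral_cong_AE)
    show "AE t in lborel. ennreal (std_normal_density t) * indicator {t. ereal t < E} t = ennreal (std_normal_density t * indicator {..x} t)"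
      using AE_lborel_singleton[of x] by eventually_elim (auto simp: real split: split_indicator)
  qed
  also have "\<dots> = ennreal (\<integral>t. std_normal_density t * indicator {..x} t \<partial>lborel)"
    by (rule nn_integral_eq_integral) (auto intro!: integrable_real_mult_indicator)
  finally show ?thesis by (simp add: Phi_e_real real)
next
  case PInf
  then show ?thesis by (simp add: Phi_e_def nn_integral_std_normal)
next
  case MInf
  then show ?thesis by (simp add: Phi_e_def)
qed

lemma Phi_e_nonneg: "0 \<le> Phi_e E"
proof (cases E)
  case (real r) then show ?thesis by (simp only: Phi_e_real) (auto intro!: integral_nonneg_AE)
qed (auto simp: Phi_e_def)

lemma Phi_interval:
  assumes "L \<le> U"
  shows "(\<integral>\<^sup>+t. ennreal (std_normal_density t) * indicator {t. L \<le> ereal t \<and> ereal t < U} t \<partial>lborel)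
        = ennreal (Phi_e U - Phi_e L)"
proof -
  have "ennreal (Phi_e U) = (\<integral>\<^sup>+t. ennreal (std_normal_density t) * indicator {t. ereal t < U} t \<partial>lborel)"
    by (rule Psi_eq[symmetric])
  also have "\<dots> = (\<integral>\<^sup>+t. ennreal (std_normal_density t) * indicator {t. ereal t < L} t
                  + ennreal (std_normal_density t) * indicator {t. L \<le> ereal t \<and> ereal t < U} t \<partial>lborel)"
    using assms by (intro nn_integral_cong) (auto split: split_indicator)
  also have "\<dots> = ennreal (Phi_e L) + (\<integral>\<^sup>+t. ennreal (std_normal_density t) * indicator {t. L \<le> ereal t \<and> ereal t < U} t \<partial>lborel)"
    by (subst nn_integral_add) (auto simp: Psi_eq)
  finally have *: "ennreal (Phi_e U) = ennreal (Phi_e L) + (\<integral>\<^sup>+t. ennreal (std_normal_density t) * indicator {t. L \<le> ereal t \<and> ereal t < U} t \<partial>lborel)" .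
  then have "(\<integral>\<^sup>+t. ennreal (std_normal_density t) * indicator {t. L \<le> ereal t \<and> ereal t < U} t \<partial>lborel) = ennreal (Phi_e U) - ennreal (Phi_e L)"
    by (simp add: ennreal_add_diff_cancel_left)
  also have "\<dots> = ennreal (Phi_e U - Phi_e L)"
    by (simp add: ennreal_minus Phi_e_nonneg)
  finally show ?thesis .
qed

lemma norm_thr_le: "0 < s \<Longrightarrow> (L \<le> ereal (z + s * x)) \<longleftrightarrow> (norm_thr L z s \<le> ereal x)"
  by (cases L) (auto simp: norm_thr_def field_simps)

lemma norm_thr_less: "0 < s \<Longrightarrow> (ereal (z + s * x) < U) \<longleftrightarrow> (ereal x < norm_thr U z s)"
  by (cases U) (auto simp: norm_thr_def field_simps)

lemma norm_thr_mono: "0 < s \<Longrightarrow> L \<le> U \<Longrightarrow> norm_thr L z s \<le> norm_thr U z s"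
  by (cases L; cases U) (auto simp: norm_thr_def divide_right_mono)

lemma norm_thr_strict_mono: "0 < s \<Longrightarrow> L < U \<Longrightarrow> norm_thr L z s < norm_thr U z s"
  by (cases L; cases U) (auto simp: norm_thr_def divide_strict_right_mono)

lemma normal_density_scale: "0 < s \<Longrightarrow> s * normal_density 0 s (s * x) = std_normal_density x"
  by (simp add: normal_density_def real_sqrt_mult power_mult_distrib field_simps)

lemma ereal_interval_borel[measurable]: "{x::real. L \<le> ereal x \<and> ereal x < U} \<in> sets borel"
proof -
  have "ereal \<in> borel_measurable borel" by (intro borel_measurable_continuous_onI continuous_intros)
  moreover have "{L..<U} \<in> sets (borel :: ereal measure)" by simp
  ultimately have "ereal -` {L..<U} \<inter> space borel \<in> sets borel" by (rule measurable_sets)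
  moreover have "ereal -` {L..<U} \<inter> space borel = {x::real. L \<le> ereal x \<and> ereal x < U}" by auto
  ultimately show ?thesis by simp
qed

lemma interval_prob:
  assumes s: "0 < s" and LU: "L \<le> U"
  shows "(\<integral>\<^sup>+y. ennreal (normal_density 0 s y) * indicator {x. L \<le> ereal x \<and> ereal x < U} (z + y) \<partial>lborel)
       = ennreal (Phi_e (norm_thr U z s) - Phi_e (norm_thr L z s))"
proof -
  have "(\<integral>\<^sup>+y. ennreal (normal_density 0 s y) * indicator {x. L \<le> ereal x \<and> ereal x < U} (z + y) \<partial>lborel)
      = ennreal \<bar>s\<bar> * (\<integral>\<^sup>+x. ennreal (normal_density 0 s (0 + s * x)) * indicator {x. L \<le> ereal x \<and> ereal x < U} (z + (0 + s * x)) \<partial>lborel)"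
    by (rule nn_integral_real_affine) (use s in auto)
  also have "\<dots> = (\<integral>\<^sup>+x. ennreal \<bar>s\<bar> * (ennreal (normal_density 0 s (0 + s * x)) * indicator {x. L \<le> ereal x \<and> ereal x < U} (z + (0 + s * x))) \<partial>lborel)"
    by (rule nn_integral_cmult[symmetric]) measurable
  also have "\<dots> = (\<integral>\<^sup>+x. ennreal (std_normal_density x) * indicator {t. norm_thr L z s \<le> ereal t \<and> ereal t < norm_thr U z s} x \<partial>lborel)"
  proof (intro nn_integral_cong)
    fix x
    have h1: "ennreal \<bar>s\<bar> * ennreal (normal_density 0 s (0 + s * x)) = ennreal (std_normal_density x)"
      using s by (simp add: ennreal_mult'[symmetric] normal_density_scale)
    have h2: "indicator {x. L \<le> ereal x \<and> ereal x < U} (z + (0 + s * x)) = (indicator {t. norm_thr L z s \<le> ereal t \<and> ereal t < norm_thr U z s} x :: ennreal)"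
      unfolding indicator_def using norm_thr_le[OF s, of L z x] norm_thr_less[OF s, of z x U] by simp
    show "ennreal \<bar>s\<bar> * (ennreal (normal_density 0 s (0 + s * x)) * indicator {x. L \<le> ereal x \<and> ereal x < U} (z + (0 + s * x)))
        = ennreal (std_normal_density x) * indicator {t. norm_thr L z s \<le> ereal t \<and> ereal t < norm_thr U z s} x"
      by (simp only: mult.assoc[symmetric] h1 h2)
  qed
  also have "\<dots> = ennreal (Phi_e (norm_thr U z s) - Phi_e (norm_thr L z s))"
    by (rule Phi_interval) (rule norm_thr_mono[OF s LU])
  finally show ?thesis .
qed

lemma conv_step:
  assumes s: "0 < \<sigma>" and c: "0 \<le> c" and S[measurable]: "S \<in> sets borel"
  shows "(\<integral>\<^sup>+t. (\<integral>\<^sup>+u. ennreal (normal_density 0 \<sigma> u) * indicator S (x + c * t + u) \<partial>lborel) * ennreal (std_normal_density t) \<partial>lborel)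
       = (\<integral>\<^sup>+y. ennreal (normal_density 0 (sqrt (c\<^sup>2 + \<sigma>\<^sup>2)) y) * indicator S (x + y) \<partial>lborel)"
proof (cases "c = 0")
  case True
  have "(\<integral>\<^sup>+t. (\<integral>\<^sup>+u. ennreal (normal_density 0 \<sigma> u) * indicator S (x + c * t + u) \<partial>lborel) * ennreal (std_normal_density t) \<partial>lborel)
      = (\<integral>\<^sup>+u. ennreal (normal_density 0 \<sigma> u) * indicator S (x + u) \<partial>lborel) * (\<integral>\<^sup>+t. ennreal (std_normal_density t) \<partial>lborel)"
    using True by (simp add: nn_integral_cmult)
  then show ?thesis using True s by (simp add: nn_integral_std_normal)
next
  case False
  with c have cpos: "0 < c" by simp
  define H where "H v = (\<integral>\<^sup>+u. ennreal (normal_density 0 \<sigma> u) * indicator S (x + v + u) \<partial>lborel)" for v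
  have H[measurable]: "H \<in> borel_measurable borel"
    unfolding H_def by measurable
  have "(\<integral>\<^sup>+v. H v * ennreal (normal_density 0 c v) \<partial>lborel)
      = ennreal \<bar>c\<bar> * (\<integral>\<^sup>+t. H (0 + c * t) * ennreal (normal_density 0 c (0 + c * t)) \<partial>lborel)"
    by (rule nn_integral_real_affine) (use cpos in auto)
  also have "\<dots> = (\<integral>\<^sup>+t. H (c * t) * ennreal (std_normal_density t) \<partial>lborel)"
  proof (subst nn_integral_cmult[symmetric], measurable, intro nn_integral_cong)
    fix t
    have e: "ennreal c * ennreal (normal_density 0 c (c * t)) = ennreal (std_normal_density t)"
      using cpos by (simp only: ennreal_mult[symmetric] less_imp_le normal_density_nonneg normal_density_scale)
    have "ennreal \<bar>c\<bar> * (H (0 + c * t) * ennreal (normal_density 0 c (0 + c * t)))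
        = H (c * t) * (ennreal c * ennreal (normal_density 0 c (c * t)))"
      using cpos by (simp add: ac_simps)
    then show "ennreal \<bar>c\<bar> * (H (0 + c * t) * ennreal (normal_density 0 c (0 + c * t))) = H (c * t) * ennreal (std_normal_density t)"
      by (simp only: e)
  qed
  finally have 1: "(\<integral>\<^sup>+t. H (c * t) * ennreal (std_normal_density t) \<partial>lborel) = (\<integral>\<^sup>+v. H v * ennreal (normal_density 0 c v) \<partial>lborel)" ..
  have tr: "H v = (\<integral>\<^sup>+y. ennreal (normal_density 0 \<sigma> (y - v)) * indicator S (x + y) \<partial>lborel)" for v
  proof -
    have "H v = ennreal \<bar>1\<bar> * (\<integral>\<^sup>+y. ennreal (normal_density 0 \<sigma> (- v + 1 * y)) * indicator S (x + v + (- v + 1 * y)) \<partial>lborel)"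
      unfolding H_def by (rule nn_integral_real_affine) auto
    then show ?thesis by simp
  qed
  have "(\<integral>\<^sup>+v. H v * ennreal (normal_density 0 c v) \<partial>lborel)
      = (\<integral>\<^sup>+v. (\<integral>\<^sup>+y. ennreal (normal_density 0 \<sigma> (y - v)) * indicator S (x + y) * ennreal (normal_density 0 c v) \<partial>lborel) \<partial>lborel)"
    by (simp add: tr nn_integral_multc)
  also have "\<dots> = (\<integral>\<^sup>+y. (\<integral>\<^sup>+v. ennreal (normal_density 0 \<sigma> (y - v)) * indicator S (x + y) * ennreal (normal_density 0 c v) \<partial>lborel) \<partial>lborel)"
    by (rule lborel_pair.Fubini') measurable
  also have "\<dots> = (\<integral>\<^sup>+y. indicator S (x + y) * (\<integral>\<^sup>+v. ennreal (normal_density 0 \<sigma> (y - v) * normal_density 0 c v) \<partial>lborel) \<partial>lborel)"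
    by (subst nn_integral_cmult[symmetric]) (auto intro!: nn_integral_cong simp: ennreal_mult ac_simps)
  also have "\<dots> = (\<integral>\<^sup>+y. ennreal (normal_density 0 (sqrt (c\<^sup>2 + \<sigma>\<^sup>2)) y) * indicator S (x + y) \<partial>lborel)"
  proof (intro nn_integral_cong)
    fix y
    have cv: "(\<integral>\<^sup>+v. ennreal (normal_density 0 \<sigma> (y - v) * normal_density 0 c v) \<partial>lborel) = ennreal (normal_density 0 (sqrt (\<sigma>\<^sup>2 + c\<^sup>2)) y)"
      using fun_cong[OF conv_normal_density_zero_mean[OF s cpos], of y] by simp
    show "indicator S (x + y) * (\<integral>\<^sup>+v. ennreal (normal_density 0 \<sigma> (y - v) * normal_density 0 c v) \<partial>lborel) = ennreal (normal_density 0 (sqrt (c\<^sup>2 + \<sigma>\<^sup>2)) y) * indicator S (x + y)"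
      unfolding cv by (simp add: ac_simps)
  qed
  finally show ?thesis using 1 by (simp add: H_def add.assoc)
qed

lemma mvm_inner: "(A *v x) $ m = A $ m \<bullet> (x :: real^'n)"
  by (simp add: matrix_vector_mult_def inner_vec_def mult.commute)

lemma measurable_inner_const[measurable]: "(\<lambda>x::real^'n. a \<bullet> x) \<in> borel_measurable borel"
  by (intro borel_measurable_continuous_onI continuous_intros)

lemma nn_integral_vec_affine:
  fixes t :: "'a::euclidean_space"
  assumes f[measurable]: "f \<in> borel_measurable borel" and c: "c \<noteq> 0"
  shows "(\<integral>\<^sup>+x. f x \<partial>lborel) = ennreal (\<bar>c\<bar> ^ DIM('a)) * (\<integral>\<^sup>+x. f (t + c *\<^sub>R x) \<partial>lborel)"
  by (subst lborel_affine[OF c, of t]) (simp add: nn_integral_density nn_integral_distr nn_integral_cmult)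

lemma normal_density_shift_scale: "0 < s \<Longrightarrow> s * normal_density \<mu> s (\<mu> + s * x) = std_normal_density x"
  by (simp add: normal_density_def real_sqrt_mult power_mult_distrib field_simps)

lemma nn_integral_normal_density: "0 < \<sigma> \<Longrightarrow> (\<integral>\<^sup>+t. ennreal (normal_density \<mu> \<sigma> t) \<partial>lborel) = 1"
  by (subst nn_integral_eq_integral) (auto simp: integrable_normal_density integral_normal_density)

lemma G_le1: assumes s: "0 < \<sigma>" shows "(\<integral>\<^sup>+u. ennreal (normal_density 0 \<sigma> u) * indicator S (x + u) \<partial>lborel) \<le> 1"
proof -
  have "(\<integral>\<^sup>+u. ennreal (normal_density 0 \<sigma> u) * indicator S (x + u) \<partial>lborel) \<le> (\<integral>\<^sup>+u. ennreal (normal_density 0 \<sigma> u) \<partial>lborel)"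
    by (intro nn_integral_mono) (auto split: split_indicator)
  then show ?thesis by (simp add: nn_integral_normal_density[OF s])
qed

lemma quant_lik_eq:
  fixes A :: "real^'n^'m" and Q :: "real \<Rightarrow> 'c" and I :: "'m \<Rightarrow> real set"
  assumes QI: "\<And>m x. Q x = ybar $ m \<longleftrightarrow> x \<in> I m" and I[measurable]: "\<And>m. I m \<in> sets borel"
  shows "quant_lik A \<sigma> Q ybar h0 = enn2real (\<Prod>m\<in>UNIV. \<integral>\<^sup>+u. ennreal (normal_density 0 \<sigma> u) * indicator (I m) ((A *v h0) $ m + u) \<partial>lborel)"
proof -
  have ind: "indicator {n::real^'m. \<forall>m. Q ((A *v h0) $ m + n $ m) = ybar $ m} n = (\<Prod>m\<in>UNIV. indicator (I m) ((A *v h0) $ m + n $ m) :: real)" for n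
  proof (cases "\<forall>m. (A *v h0) $ m + n $ m \<in> I m")
    case True then show ?thesis by (simp add: QI)
  next
    case False
    then obtain m where "(A *v h0) $ m + n $ m \<notin> I m" by blast
    then have "(\<Prod>m\<in>UNIV. indicator (I m) ((A *v h0) $ m + n $ m) :: real) = 0"
      by (intro prod_zero bexI[of _ m]) auto
    with False show ?thesis by (simp add: QI)
  qed
  have "quant_lik A \<sigma> Q ybar h0 = (\<integral>n. (\<Prod>m\<in>UNIV. normal_density 0 \<sigma> (n $ m) * indicator (I m) ((A *v h0) $ m + n $ m)) \<partial>lborel)"
    unfolding quant_lik_def ind by (simp add: prod.distrib mult.commute)
  also have "\<dots> = enn2real (\<integral>\<^sup>+n. ennreal (\<Prod>m\<in>UNIV. normal_density 0 \<sigma> (n $ m) * indicator (I m) ((A *v h0) $ m + n $ m)) \<partial>lborel)"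
    by (rule integral_eq_nn_integral) (auto intro!: prod_nonneg)
  also have "(\<integral>\<^sup>+n. ennreal (\<Prod>m\<in>UNIV. normal_density 0 \<sigma> (n $ m) * indicator (I m) ((A *v h0) $ m + n $ m)) \<partial>lborel)
      = (\<integral>\<^sup>+n. (\<Prod>m\<in>UNIV. ennreal (normal_density 0 \<sigma> ((n :: real^'m) $ m)) * indicator (I m) ((A *v h0) $ m + n $ m)) \<partial>lborel)"
    by (intro nn_integral_cong) (simp add: prod_ennreal[symmetric] ennreal_mult ennreal_indicator)
  also have "\<dots> = (\<Prod>m\<in>UNIV. \<integral>\<^sup>+u. ennreal (normal_density 0 \<sigma> u) * indicator (I m) ((A *v h0) $ m + u) \<partial>lborel)"
    by (rule nn_integral_vec_prod) measurable
  finally show ?thesis .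
qed

lemma pert_lik_eq:
  fixes A :: "real^'n^'m" and Q :: "real \<Rightarrow> 'c" and I :: "'m \<Rightarrow> real set"
  assumes QI: "\<And>m x. Q x = ybar $ m \<longleftrightarrow> x \<in> I m" and I[measurable]: "\<And>m. I m \<in> sets borel"
    and sig: "0 < \<sigma>" and a: "0 < abar" "abar < 1"
  shows "pert_lik A \<sigma> abar Q ybar ht = enn2real (\<integral>\<^sup>+w. (\<Prod>m\<in>UNIV.
            (\<integral>\<^sup>+u. ennreal (normal_density 0 \<sigma> u) * indicator (I m) ((A *v (\<chi> i. ht $ i / sqrt abar)) $ m + sqrt ((1 - abar) / abar) * (A $ m \<bullet> w) + u) \<partial>lborel))
          * ennreal (gdens w) \<partial>lborel)"
proof -
  define s where "s = sqrt ((1 - abar) / abar)"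
  have s: "0 < s" using a by (simp add: s_def)
  define \<mu> :: "real^'n" where "\<mu> = (\<chi> i. ht $ i / sqrt abar)"
  define G where "G m x = (\<integral>\<^sup>+u. ennreal (normal_density 0 \<sigma> u) * indicator (I m) (x + u) \<partial>lborel)" for m x
  have G[measurable]: "G m \<in> borel_measurable borel" for m
    unfolding G_def by measurable
  have G1: "G m x \<le> 1" for m x unfolding G_def by (rule G_le1[OF sig])
  define QL where "QL h0 = (\<Prod>m\<in>UNIV. G m ((A *v h0) $ m))" for h0
  have QL[measurable]: "QL \<in> borel_measurable borel"
    unfolding QL_def by (simp add: mvm_inner) measurable
  have QL1: "QL h0 \<le> 1" for h0
    unfolding QL_def by (rule prod_le_1) (auto simp: G1)
  have QLfin: "QL h0 < top" for h0
    using QL1[of h0] by (simp add: le_less_trans[OF _ ennreal_one_less_top])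
  have ql: "quant_lik A \<sigma> Q ybar h0 = enn2real (QL h0)" for h0
    unfolding QL_def G_def by (rule quant_lik_eq[OF QI I])
  define D where "D h0 = (\<Prod>i\<in>UNIV. normal_density (ht $ i / sqrt abar) s (h0 $ i))" for h0 :: "real^'n"
  have D[measurable]: "D \<in> borel_measurable borel" unfolding D_def by measurable
  have Dnn: "0 \<le> D h0" for h0 unfolding D_def by (auto intro!: prod_nonneg)
  have "pert_lik A \<sigma> abar Q ybar ht = (\<integral>h0. enn2real (QL h0) * D h0 \<partial>lborel)"
    unfolding pert_lik_def ql D_def s_def ..
  also have "\<dots> = enn2real (\<integral>\<^sup>+h0. ennreal (enn2real (QL h0) * D h0) \<partial>lborel)"
    by (rule integral_eq_nn_integral) (auto simp: Dnn)
  also have "(\<integral>\<^sup>+h0. ennreal (enn2real (QL h0) * D h0) \<partial>lborel) = (\<integral>\<^sup>+h0. QL h0 * ennreal (D h0) \<partial>lborel)"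
    by (intro nn_integral_cong) (simp add: ennreal_mult Dnn QLfin ennreal_enn2real)
  also have "\<dots> = ennreal (\<bar>s\<bar> ^ DIM(real^'n)) * (\<integral>\<^sup>+x. QL (\<mu> + s *\<^sub>R x) * ennreal (D (\<mu> + s *\<^sub>R x)) \<partial>lborel)"
    by (rule nn_integral_vec_affine) (use s in auto)
  also have "\<dots> = (\<integral>\<^sup>+x. QL (\<mu> + s *\<^sub>R x) * ennreal (gdens x) \<partial>lborel)"
  proof (subst nn_integral_cmult[symmetric], measurable, intro nn_integral_cong)
    fix x :: "real^'n"
    have "s ^ CARD('n) * D (\<mu> + s *\<^sub>R x) = (\<Prod>i\<in>UNIV. s * normal_density (\<mu> $ i) s (\<mu> $ i + s * x $ i))"
      by (simp add: D_def prod.distrib \<mu>_def)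
    also have "\<dots> = gdens x"
      by (simp add: normal_density_shift_scale[OF s] gdens_def)
    finally have e: "s ^ CARD('n) * D (\<mu> + s *\<^sub>R x) = gdens x" .
    have "ennreal (\<bar>s\<bar> ^ DIM(real^'n)) * (QL (\<mu> + s *\<^sub>R x) * ennreal (D (\<mu> + s *\<^sub>R x)))
        = QL (\<mu> + s *\<^sub>R x) * ennreal (s ^ CARD('n) * D (\<mu> + s *\<^sub>R x))"
      using s Dnn by (simp add: ennreal_mult ac_simps)
    then show "ennreal (\<bar>s\<bar> ^ DIM(real^'n)) * (QL (\<mu> + s *\<^sub>R x) * ennreal (D (\<mu> + s *\<^sub>R x))) = QL (\<mu> + s *\<^sub>R x) * ennreal (gdens x)"
      by (simp only: e)
  qed
  also have "\<dots> = (\<integral>\<^sup>+w. (\<Prod>m\<in>UNIV. G m ((A *v \<mu>) $ m + s * (A $ m \<bullet> w))) * ennreal (gdens w) \<partial>lborel)"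
    by (intro nn_integral_cong) (simp add: QL_def matrix_vector_right_distrib mvm_inner)
  finally show ?thesis by (simp add: G_def s_def \<mu>_def add.assoc)
qed

lemma Phi_e_mono: "L \<le> U \<Longrightarrow> Phi_e L \<le> Phi_e U"
proof -
  assume "L \<le> U"
  then have "(\<integral>\<^sup>+t. ennreal (std_normal_density t) * indicator {t. ereal t < L} t \<partial>lborel)
      \<le> (\<integral>\<^sup>+t. ennreal (std_normal_density t) * indicator {t. ereal t < U} t \<partial>lborel)"
    by (intro nn_integral_mono) (auto split: split_indicator)
  then have "ennreal (Phi_e L) \<le> ennreal (Phi_e U)" by (simp only: Psi_eq)
  then show ?thesis using Phi_e_nonneg[of L] Phi_e_nonneg[of U] by (auto simp: ennreal_le_iff2)
qed

lemma Phi_e_strict: "L < U \<Longrightarrow> Phi_e L < Phi_e U"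
proof -
  assume LU: "L < U"
  obtain a where a: "L < ereal a" "ereal a < U" using ereal_dense2[OF LU] by blast
  obtain b where b: "ereal a < ereal b" "ereal b < U" using ereal_dense2[OF a(2)] by blast
  have ab: "a < b" using b by simp
  define f where "f t = ennreal (std_normal_density t) * indicator {a<..<b} t" for t
  have "(\<integral>\<^sup>+t. f t \<partial>lborel) \<noteq> 0"
  proof
    assume "(\<integral>\<^sup>+t. f t \<partial>lborel) = 0"
    then have AEf: "AE t in lborel. f t = 0" by (subst (asm) nn_integral_0_iff_AE) (auto simp: f_def[abs_def])
    have pos: "0 < std_normal_density t" for t by (simp add: normal_density_pos)
    from AEf have "AE t in lborel. t \<notin> {a<..<b}"
      proof (eventually_elim)
      case (elim t)
      show ?case
      proof
        assume "t \<in> {a<..<b}"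
        then have "ennreal (std_normal_density t) = 0" using elim by (simp add: f_def)
        then show False using pos[of t] by simp
      qed
    qed
    then have "emeasure lborel {a<..<b} = 0"
      by (subst (asm) AE_iff_measurable[where N="{a<..<b}"]) auto
    with ab show False by simp
  qed
  moreover have "(\<integral>\<^sup>+t. f t \<partial>lborel) \<le> (\<integral>\<^sup>+t. ennreal (std_normal_density t) * indicator {t. L \<le> ereal t \<and> ereal t < U} t \<partial>lborel)"
    unfolding f_def using a b
    by (intro nn_integral_mono) (auto split: split_indicator intro: order.trans[of _ "ereal a"] order.strict_trans[of _ "ereal b"] less_imp_le)
  ultimately have "ennreal (Phi_e U - Phi_e L) \<noteq> 0"
    using Phi_interval[of L U] LU by auto
  then show ?thesis by (simp add: ennreal_eq_0_iff)
qed

lemma pert_lik_closed: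
  fixes A :: "real^'n^'m" and Q :: "real \<Rightarrow> 'c" and L U :: "'m \<Rightarrow> ereal"
  assumes QI: "\<And>m x. Q x = ybar $ m \<longleftrightarrow> L m \<le> ereal x \<and> ereal x < U m"
    and LU: "\<And>m. L m \<le> U m"
    and sig: "0 < \<sigma>" and a: "0 < abar" "abar < 1"
    and orth: "\<And>i j. i \<noteq> j \<Longrightarrow> (A $ i) \<bullet> (A $ j) = 0"
  shows "pert_lik A \<sigma> abar Q ybar ht =
     (\<Prod>m\<in>UNIV. Phi_e (norm_thr (U m) (((1 / sqrt abar) *\<^sub>R (A *v ht)) $ m) (sqrt ((1 - abar) / abar * (norm (A $ m))\<^sup>2 + \<sigma>\<^sup>2)))
               - Phi_e (norm_thr (L m) (((1 / sqrt abar) *\<^sub>R (A *v ht)) $ m) (sqrt ((1 - abar) / abar * (norm (A $ m))\<^sup>2 + \<sigma>\<^sup>2))))"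
proof -
  define I where "I m = {x. L m \<le> ereal x \<and> ereal x < U m}" for m
  have QI': "Q x = ybar $ m \<longleftrightarrow> x \<in> I m" for m x by (simp add: I_def QI)
  have I[measurable]: "I m \<in> sets borel" for m unfolding I_def by measurable
  define s where "s = sqrt ((1 - abar) / abar)"
  have s: "0 < s" using a by (simp add: s_def)
  define z where "z = (1 / sqrt abar) *\<^sub>R (A *v ht)"
  have zA: "(A *v (\<chi> i. ht $ i / sqrt abar)) $ m = z $ m" for m
    by (simp add: z_def mvm_inner inner_vec_def sum_distrib_left divide_inverse ac_simps)
  define sg where "sg m = sqrt ((1 - abar) / abar * (norm (A $ m))\<^sup>2 + \<sigma>\<^sup>2)" for m
  have sgpos: "0 < sg m" for m using sig a by (simp add: sg_def add_nonneg_pos)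
  define F where "F m y = (\<integral>\<^sup>+u. ennreal (normal_density 0 \<sigma> u) * indicator (I m) (z $ m + s * y + u) \<partial>lborel)" for m y
  have F[measurable]: "F m \<in> borel_measurable borel" for m unfolding F_def by measurable
  have "pert_lik A \<sigma> abar Q ybar ht = enn2real (\<integral>\<^sup>+w. (\<Prod>m\<in>UNIV. F m (A $ m \<bullet> w)) * ennreal (gdens w) \<partial>lborel)"
    unfolding pert_lik_eq[OF QI' I sig a] F_def zA s_def ..
  also have "(\<integral>\<^sup>+w. (\<Prod>m\<in>UNIV. F m (A $ m \<bullet> w)) * ennreal (gdens w) \<partial>lborel)
      = (\<Prod>m\<in>UNIV. \<integral>\<^sup>+t. F m (norm (A $ m) * t) * ennreal (std_normal_density t) \<partial>lborel)"
    by (rule gauss_orth[OF orth F])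
  also have "\<dots> = (\<Prod>m\<in>UNIV. ennreal (Phi_e (norm_thr (U m) (z $ m) (sg m)) - Phi_e (norm_thr (L m) (z $ m) (sg m))))"
  proof (intro prod.cong refl)
    fix m
    have c: "0 \<le> s * norm (A $ m)" using s by simp
    have sq: "(s * norm (A $ m))\<^sup>2 + \<sigma>\<^sup>2 = (1 - abar) / abar * (norm (A $ m))\<^sup>2 + \<sigma>\<^sup>2"
      using a by (simp add: s_def power_mult_distrib)
    have "(\<integral>\<^sup>+t. F m (norm (A $ m) * t) * ennreal (std_normal_density t) \<partial>lborel)
        = (\<integral>\<^sup>+t. (\<integral>\<^sup>+u. ennreal (normal_density 0 \<sigma> u) * indicator (I m) (z $ m + (s * norm (A $ m)) * t + u) \<partial>lborel) * ennreal (std_normal_density t) \<partial>lborel)"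
      by (simp add: F_def mult.assoc)
    also have "\<dots> = (\<integral>\<^sup>+y. ennreal (normal_density 0 (sqrt ((s * norm (A $ m))\<^sup>2 + \<sigma>\<^sup>2)) y) * indicator (I m) (z $ m + y) \<partial>lborel)"
      by (rule conv_step[OF sig c I])
    also have "\<dots> = ennreal (Phi_e (norm_thr (U m) (z $ m) (sg m)) - Phi_e (norm_thr (L m) (z $ m) (sg m)))"
      unfolding sq sg_def[symmetric] I_def by (rule interval_prob[OF sgpos LU])
    finally show "(\<integral>\<^sup>+t. F m (norm (A $ m) * t) * ennreal (std_normal_density t) \<partial>lborel) = ennreal (Phi_e (norm_thr (U m) (z $ m) (sg m)) - Phi_e (norm_thr (L m) (z $ m) (sg m)))" .
  qed
  also have "\<dots> = ennreal (\<Prod>m\<in>UNIV. Phi_e (norm_thr (U m) (z $ m) (sg m)) - Phi_e (norm_thr (L m) (z $ m) (sg m)))"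
    by (rule prod_ennreal) (simp add: Phi_e_mono norm_thr_mono[OF sgpos LU])
  finally have fin: "pert_lik A \<sigma> abar Q ybar ht = enn2real (ennreal (\<Prod>m\<in>UNIV. Phi_e (norm_thr (U m) (z $ m) (sg m)) - Phi_e (norm_thr (L m) (z $ m) (sg m))))" .
  have Pnn: "0 \<le> (\<Prod>m\<in>UNIV. Phi_e (norm_thr (U m) (z $ m) (sg m)) - Phi_e (norm_thr (L m) (z $ m) (sg m)))"
    by (intro prod_nonneg) (simp add: Phi_e_mono norm_thr_mono[OF sgpos LU])
  have "pert_lik A \<sigma> abar Q ybar ht = (\<Prod>m\<in>UNIV. Phi_e (norm_thr (U m) (z $ m) (sg m)) - Phi_e (norm_thr (L m) (z $ m) (sg m)))"
    using fin Pnn by simp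
  then show ?thesis unfolding z_def sg_def .
qed

lemma Phi_e_LBINT: "Phi_e (ereal x) = (LBINT t = -\<infinity>..ereal x. std_normal_density t)"
proof -
  have "(LBINT t = -\<infinity>..ereal x. std_normal_density t) = (\<integral>t. indicator {..<x} t * std_normal_density t \<partial>lborel)"
    by (simp add: interval_lebesgue_integral_def set_lebesgue_integral_def)
  also have "\<dots> = (\<integral>t. std_normal_density t * indicator {..x} t \<partial>lborel)"
  proof (rule integral_cong_AE)
    show "AE t in lborel. indicator {..<x} t * std_normal_density t = std_normal_density t * indicator {..x} t"
      using AE_lborel_singleton[of x] by eventually_elim (auto split: split_indicator)
  qed measurable
  finally show ?thesis by (simp add: Phi_e_real)
qed

lemma Phi_e_split: "Phi_e (ereal x) = Phi_e (ereal 0) + (LBINT t = ereal 0..ereal x. std_normal_density t)"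
proof -
  have int: "interval_lebesgue_integrable lborel a b std_normal_density" for a b
    unfolding interval_lebesgue_integrable_def set_integrable_def
    by (auto intro!: integrable_mult_indicator[where 'b=real, simplified])
  show ?thesis
    unfolding Phi_e_LBINT by (rule interval_integral_sum[symmetric]) (rule int)
qed

lemma Phi_deriv: "((\<lambda>x. Phi_e (ereal x)) has_real_derivative std_normal_density x) (at x)"
proof -
  define a where "a = - \<bar>x\<bar> - 1"
  define b where "b = \<bar>x\<bar> + 1"
  have cont: "continuous_on {a..b} std_normal_density"
    by (simp add: std_normal_density_def continuous_intros)
  have "((\<lambda>u. LBINT y=ereal 0..u. std_normal_density y) has_vector_derivative std_normal_density x) (at x within {a..b})"
    by (rule interval_integral_FTC2[OF _ _ cont]) (auto simp: a_def b_def)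
  then have "((\<lambda>u. LBINT y=ereal 0..u. std_normal_density y) has_vector_derivative std_normal_density x) (at x within {a<..<b})"
    by (rule has_vector_derivative_within_subset) auto
  then have "((\<lambda>u. LBINT y=ereal 0..u. std_normal_density y) has_vector_derivative std_normal_density x) (at x)"
    by (subst (asm) at_within_open) (auto simp: a_def b_def)
  then have "((\<lambda>u. Phi_e (ereal 0) + (LBINT y=ereal 0..u. std_normal_density y)) has_real_derivative std_normal_density x) (at x)"
    by (auto intro!: derivative_eq_intros simp: has_real_derivative_iff_has_vector_derivative)
  then show ?thesis
    by (simp only: Phi_e_split[symmetric])
qed

lemma Phi_thr_deriv:
  assumes s: "0 < s"
  shows "((\<lambda>zz. Phi_e (norm_thr E zz s)) has_real_derivative (- gauss_exp_e (norm_thr E zz s) / (sqrt (2 * pi) * s))) (at zz)"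
proof (cases E)
  case (real u)
  have "((\<lambda>zz. Phi_e (ereal ((u - zz) / s))) has_real_derivative std_normal_density ((u - zz) / s) * (- 1 / s)) (at zz)"
    by (rule DERIV_chain2[where f="\<lambda>x. Phi_e (ereal x)", OF Phi_deriv]) (use s in \<open>auto intro!: derivative_eq_intros\<close>)
  moreover have "std_normal_density ((u - zz) / s) * (- 1 / s) = - gauss_exp_e (ereal ((u - zz) / s)) / (sqrt (2 * pi) * s)"
    by (simp add: std_normal_density_def gauss_exp_e_def)
  ultimately show ?thesis by (simp add: real norm_thr_def)
next
  case PInf then show ?thesis by (simp add: norm_thr_def gauss_exp_e_def)
next
  case MInf then show ?thesis by (simp add: norm_thr_def gauss_exp_e_def)
qed

theorem proposition2:
  fixes A :: "real^'n^'m"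
    and sigma_n abar :: real
    and Q :: "real \<Rightarrow> 'c"
    and r_low r_up :: "'c \<Rightarrow> ereal"
    and ybar :: "'c^'m"
    and ht :: "real^'n"
  assumes sigma_pos: "sigma_n > 0"
    and abar: "0 < abar" "abar < 1"
    and quant: "\<And>r. r \<in> range Q \<Longrightarrow>
                 r_low r < r_up r \<and> Q -` {r} = {x. r_low r \<le> ereal x \<and> ereal x < r_up r}"
    and ybar_codewords: "\<And>m. ybar $ m \<in> range Q"
    and row_orth: "\<And>i j. i \<noteq> j \<Longrightarrow> (A $ i) \<bullet> (A $ j) = 0"
  shows
    "let z = (1 / sqrt abar) *\<^sub>R (A *v ht);
         sig = (\<lambda>m. sqrt ((1 - abar) / abar * (norm (A $ m))\<^sup>2 + sigma_n\<^sup>2));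
         yup = (\<lambda>m. norm_thr (r_up (ybar $ m)) (z $ m) (sig m));
         ylow = (\<lambda>m. norm_thr (r_low (ybar $ m)) (z $ m) (sig m));
         g = (\<chi> m. (gauss_exp_e (ylow m) - gauss_exp_e (yup m))
                    / (sqrt (2 * pi) * sig m * (Phi_e (yup m) - Phi_e (ylow m))))
     in ((\<lambda>h. ln (pert_lik A sigma_n abar Q ybar h)) has_derivative
           (\<lambda>v. ((1 / sqrt abar) *\<^sub>R (transpose A *v g)) \<bullet> v)) (at ht)"
proof -
  define sig where "sig = (\<lambda>m. sqrt ((1 - abar) / abar * (norm (A $ m))\<^sup>2 + sigma_n\<^sup>2))"
  have sigpos: "0 < sig m" for m using sigma_pos abar by (simp add: sig_def add_nonneg_pos)
  define U where "U m = r_up (ybar $ m)" for m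
  define L where "L m = r_low (ybar $ m)" for m
  have LU: "L m < U m" for m using quant[OF ybar_codewords[of m]] by (simp add: L_def U_def)
  have QI: "Q x = ybar $ m \<longleftrightarrow> L m \<le> ereal x \<and> ereal x < U m" for m x
  proof -
    have "Q -` {ybar $ m} = {x. L m \<le> ereal x \<and> ereal x < U m}"
      using quant[OF ybar_codewords[of m]] by (simp add: L_def U_def)
    then show ?thesis by (auto simp: set_eq_iff)
  qed
  define D where "D m zz = Phi_e (norm_thr (U m) zz (sig m)) - Phi_e (norm_thr (L m) zz (sig m))" for m zz
  define D' where "D' m zz = (gauss_exp_e (norm_thr (L m) zz (sig m)) - gauss_exp_e (norm_thr (U m) zz (sig m))) / (sqrt (2 * pi) * sig m)" for m zz
  define zf where "zf h = (1 / sqrt abar) *\<^sub>R (A *v h)" for h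
  have closed: "pert_lik A sigma_n abar Q ybar h = (\<Prod>m\<in>UNIV. D m (zf h $ m))" for h
    unfolding D_def zf_def sig_def
    by (rule pert_lik_closed[OF QI less_imp_le[OF LU] sigma_pos abar row_orth])
  have Dpos: "0 < D m zz" for m zz
    unfolding D_def using Phi_e_strict[OF norm_thr_strict_mono[OF sigpos LU]] by simp
  have lnP: "(\<lambda>h. ln (pert_lik A sigma_n abar Q ybar h)) = (\<lambda>h. \<Sum>m\<in>UNIV. ln (D m (zf h $ m)))"
    by (rule ext) (simp add: closed ln_prod Dpos less_imp_neq[symmetric])
  have Dderiv: "(D m has_real_derivative D' m zz) (at zz)" for m zz
  proof -
    have "((\<lambda>zz. D m zz) has_real_derivative
        (- gauss_exp_e (norm_thr (U m) zz (sig m)) / (sqrt (2 * pi) * sig m)) - (- gauss_exp_e (norm_thr (L m) zz (sig m)) / (sqrt (2 * pi) * sig m))) (at zz)"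
      unfolding D_def by (intro DERIV_diff Phi_thr_deriv sigpos)
    then show ?thesis by (simp add: D'_def diff_divide_distrib)
  qed
  have lnD: "((\<lambda>zz. ln (D m zz)) has_real_derivative (1 / D m zz * D' m zz)) (at zz)" for m zz
    by (rule DERIV_chain2[OF DERIV_ln_divide[OF Dpos] Dderiv])
  have zfm: "zf h $ m = (1 / sqrt abar) * (A $ m \<bullet> h)" for h m
    by (simp add: zf_def mvm_inner)
  have zf_der: "((\<lambda>h. zf h $ m) has_derivative (\<lambda>v. (1 / sqrt abar) * (A $ m \<bullet> v))) (at ht)" for m
    unfolding zfm by (intro derivative_intros)
  have H: "((\<lambda>h. \<Sum>m\<in>UNIV. ln (D m (zf h $ m))) has_derivative
      (\<lambda>v. \<Sum>m\<in>UNIV. (1 / sqrt abar) * (A $ m \<bullet> v) * (1 / D m (zf ht $ m) * D' m (zf ht $ m)))) (at ht)"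
    by (intro has_derivative_sum DERIV_compose_FDERIV[OF lnD zf_der])
  define g where "g = (\<chi> m. (gauss_exp_e (norm_thr (L m) (zf ht $ m) (sig m)) - gauss_exp_e (norm_thr (U m) (zf ht $ m) (sig m)))
                    / (sqrt (2 * pi) * sig m * (Phi_e (norm_thr (U m) (zf ht $ m) (sig m)) - Phi_e (norm_thr (L m) (zf ht $ m) (sig m)))))"
  have gD: "g $ m = 1 / D m (zf ht $ m) * D' m (zf ht $ m)" for m
    by (simp add: g_def D_def D'_def field_simps)
  have lin: "(\<lambda>v. \<Sum>m\<in>UNIV. (1 / sqrt abar) * (A $ m \<bullet> v) * (1 / D m (zf ht $ m) * D' m (zf ht $ m)))
       = (\<lambda>v. ((1 / sqrt abar) *\<^sub>R (transpose A *v g)) \<bullet> v)"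
  proof (rule ext)
    fix v :: "real^'n"
    have tA: "(transpose A *v g) \<bullet> v = (\<Sum>i\<in>UNIV. (\<Sum>m\<in>UNIV. A $ m $ i * g $ m) * v $ i)"
      by (simp add: inner_vec_def matrix_vector_mult_def transpose_def)
    have "((1 / sqrt abar) *\<^sub>R (transpose A *v g)) \<bullet> v = (1 / sqrt abar) * (\<Sum>i\<in>UNIV. (\<Sum>m\<in>UNIV. A $ m $ i * g $ m) * v $ i)"
      by (simp only: inner_scaleR_left tA)
    also have "\<dots> = (1 / sqrt abar) * (\<Sum>m\<in>UNIV. g $ m * (A $ m \<bullet> v))"
      by (simp add: inner_vec_def sum_distrib_left sum_distrib_right ac_simps) (rule sum.swap)
    finally show "(\<Sum>m\<in>UNIV. (1 / sqrt abar) * (A $ m \<bullet> v) * (1 / D m (zf ht $ m) * D' m (zf ht $ m)))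
       = ((1 / sqrt abar) *\<^sub>R (transpose A *v g)) \<bullet> v"
      by (simp add: gD sum_distrib_left ac_simps)
  qed
  have final: "((\<lambda>h. ln (pert_lik A sigma_n abar Q ybar h)) has_derivative (\<lambda>v. ((1 / sqrt abar) *\<^sub>R (transpose A *v g)) \<bullet> v)) (at ht)"
    using H unfolding lnP lin .
  then show ?thesis
    unfolding Let_def g_def zf_def sig_def L_def U_def .
qed

end
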